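(* Let $f:\mathbb{X}\to\mathbb{R}$ be a finite measurable function and suppose there are $M<\infty$ and a set of positive measure on which $\frac1n|f\circ T^{-n}+f\circ T^n|<M$ for all sufficiently large $n$. Then $\limsup_n \frac1n|f\circ T^{2n}|\le 24M$ $\mu$-a.e. on $\mathbb{X}$.
   Context: Standing assumptions: $(\mathbb{X},\mathcal{X},\mu,T)$ is a probability space with $T$ an invertible, bi-measurable, measure-preserving, ergodic transformation. *)

theory Defs
  imports "HOL-Probability.Probability"
begin

definition invertible_mpt :: "'a measure \<Rightarrow> ('a \<Rightarrow> 'a) \<Rightarrow> bool" where
  "invertible_mpt M T \<longleftrightarrow>
     bij_betw T (space M) (space M) \<and>
     T \<in> measurable M M \<and>
     the_inv_into (space M) T \<in> measurable M M \<and>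
     (\<forall>A \<in> sets M. emeasure M (T -` A \<inter> space M) = emeasure M A)"

definition ergodic :: "'a measure \<Rightarrow> ('a \<Rightarrow> 'a) \<Rightarrow> bool" where
  "ergodic M T \<longleftrightarrow>
     (\<forall>A \<in> sets M. T -` A \<inter> space M = A \<longrightarrow> emeasure M A = 0 \<or> emeasure M A = 1)"

definition Tinv :: "'a measure \<Rightarrow> ('a \<Rightarrow> 'a) \<Rightarrow> 'a \<Rightarrow> 'a" where
  "Tinv M T = the_inv_into (space M) T"

end

theory Submission
  imports Defs
begin

lemma core:
  fixes V :: "nat \<Rightarrow> bool" and h :: "nat \<Rightarrow> real" and C :: real and N :: nat
  assumes inf: "\<forall>k. \<exists>m\<ge>k. V m"
    and gap: "eventually (\<lambda>m. \<not> (V m \<and> (\<forall>j\<in>{1..m div 2}. \<not> V (j + m)))) sequentially"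
    and pair: "\<And>m k. V m \<Longrightarrow> N \<le> k \<Longrightarrow> 0 < k \<Longrightarrow> k \<le> m \<Longrightarrow> \<bar>h (m - k) + h (k + m)\<bar> < C * real k"
    and C: "C > 0"
  shows "limsup (\<lambda>n. ereal (\<bar>h (2 * n)\<bar> / real n)) \<le> ereal (2 * C)"
proof -
  obtain M0 where M0: "\<And>m. m \<ge> M0 \<Longrightarrow> V m \<Longrightarrow> \<exists>j\<in>{1..m div 2}. V (j + m)"
    using gap unfolding eventually_sequentially by blast
  obtain m1 where m1: "m1 \<ge> M0" "V m1" using inf by blast
  have visit: "\<exists>m. n \<le> m \<and> m \<le> n + n div 2 \<and> V m" if n: "n \<ge> m1" for n
  proof -
    define g where "g = Greatest (\<lambda>m. m \<le> n \<and> V m)"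
    have g1: "g \<le> n \<and> V g" unfolding g_def
      by (rule GreatestI_nat[of _ m1 n]) (use m1 n in auto)
    have g2: "m1 \<le> g" unfolding g_def
      by (rule Greatest_le_nat[of _ m1 n]) (use m1 n in auto)
    show ?thesis
    proof (cases "g = n")
      case True then show ?thesis using g1 by auto
    next
      case False
      obtain j where j: "j \<in> {1..g div 2}" "V (j + g)" using M0[of g] g1 g2 m1 by auto
      have "\<not> (j + g \<le> n)"
      proof
        assume "j + g \<le> n"
        then have "j + g \<le> g"
          using Greatest_le_nat[of "\<lambda>m. m \<le> n \<and> V m" "j+g" n] j unfolding g_def[symmetric] by auto
        then show False using j by auto
      qed
      moreover have "j + g \<le> n + n div 2" using j g1 div_le_mono[of g n 2] by simp
      ultimately show ?thesis using j by (intro exI[of _ "j+g"]) auto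
    qed
  qed
  define n1 where "n1 = m1 + 2 * N + 1"
  have rec: "\<exists>j \<le> n div 2. \<bar>h (2 * n)\<bar> \<le> C * n + \<bar>h (2 * j)\<bar>" if n: "n \<ge> n1" for n
  proof -
    obtain m where m: "n \<le> m" "m \<le> n + n div 2" "V m" using visit[of n] n unfolding n1_def by auto
    define k where "k = 2 * n - m"
    have d2: "2 * (n div 2) \<le> n" by simp
    have kN: "N \<le> k" "0 < k" "k \<le> m" "k \<le> n" using m n d2 unfolding k_def n1_def by linarith+
    have e1: "m - k = 2 * (m - n)" "k + m = 2 * n" using m d2 unfolding k_def by linarith+
    have "\<bar>h (2 * (m - n)) + h (2 * n)\<bar> < C * real k" using pair[OF m(3) kN(1-3)] e1 by simp
    also have "C * real k \<le> C * real n" using kN C by auto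
    finally have "\<bar>h (2 * n)\<bar> \<le> C * n + \<bar>h (2 * (m - n))\<bar>" by linarith
    then show ?thesis using m by (intro exI[of _ "m - n"]) auto
  qed
  define K where "K = (\<Sum>i\<le>n1. \<bar>h (2 * i)\<bar>)"
  have bound: "\<bar>h (2 * n)\<bar> \<le> 2 * C * n + K" for n
  proof (induction n rule: less_induct)
    case (less n)
    show ?case
    proof (cases "n \<ge> n1")
      case True
      obtain j where j: "j \<le> n div 2" "\<bar>h (2 * n)\<bar> \<le> C * n + \<bar>h (2 * j)\<bar>" using rec[OF True] by auto
      have d2: "2 * (n div 2) \<le> n" by simp
      have "j < n" using j True d2 unfolding n1_def by linarith
      then have "\<bar>h (2 * j)\<bar> \<le> 2 * C * j + K" using less by auto
      moreover have "2 * j \<le> n" using j(1) d2 by linarith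
      then have "2 * real j \<le> real n" by (metis of_nat_le_iff of_nat_mult of_nat_numeral)
      ultimately have "\<bar>h (2 * n)\<bar> \<le> C * n + (C * (2 * real j) + K)" using j(2) by (simp add: algebra_simps)
      also have "C * (2 * real j) \<le> C * real n" using \<open>2 * real j \<le> real n\<close> C by (intro mult_left_mono) auto
      finally show ?thesis by (simp add: algebra_simps)
    next
      case False
      have "\<bar>h (2 * n)\<bar> \<le> K" unfolding K_def
        by (rule member_le_sum[of n]) (use False in auto)
      moreover have "0 \<le> 2 * C * n" using C by simp
      ultimately show ?thesis by linarith
    qed
  qed
  have K0: "K \<ge> 0" unfolding K_def by (auto intro: sum_nonneg)
  have ev: "eventually (\<lambda>n. ereal (\<bar>h (2 * n)\<bar> / real n) \<le> ereal (2 * C + K / real n)) sequentially"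
    unfolding eventually_sequentially
  proof (intro exI[of _ 1] allI impI)
    fix n :: nat assume "1 \<le> n"
    then have "real n > 0" by auto
    then have "\<bar>h (2 * n)\<bar> / real n \<le> (2 * C * n + K) / real n"
      using bound[of n] by (simp add: divide_right_mono)
    also have "\<dots> = 2 * C + K / real n" using \<open>real n > 0\<close> by (simp add: field_simps)
    finally show "ereal (\<bar>h (2 * n)\<bar> / real n) \<le> ereal (2 * C + K / real n)" by simp
  qed
  have lim: "(\<lambda>n. ereal (2 * C + K / real n)) \<longlonglongrightarrow> ereal (2 * C)"
  proof -
    have "(\<lambda>n. 2 * C + K / real n) \<longlonglongrightarrow> 2 * C + 0"
      by (intro tendsto_add tendsto_const lim_const_over_n)
    then show ?thesis by (simp add: tendsto_ereal)
  qed
  have "limsup (\<lambda>n. ereal (\<bar>h (2 * n)\<bar> / real n)) \<le> limsup (\<lambda>n. ereal (2 * C + K / real n))"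
    by (rule Limsup_mono[OF ev])
  also have "\<dots> = ereal (2 * C)" by (rule lim_imp_Limsup[OF _ lim]) simp
  finally show ?thesis .
qed



locale ipt = prob_space M for M :: "'a measure" +
  fixes T :: "'a \<Rightarrow> 'a"
  assumes invT: "invertible_mpt M T"
begin

lemma T_meas[measurable]: "T \<in> measurable M M"
  using invT unfolding invertible_mpt_def by auto

lemma Tinv_meas[measurable]: "Tinv M T \<in> measurable M M"
  using invT unfolding invertible_mpt_def Tinv_def by auto

lemma Tn_meas[measurable]: "(T ^^ n) \<in> measurable M M"
  by (induction n) auto

lemma Tinvn_meas[measurable]: "(Tinv M T ^^ n) \<in> measurable M M"
  by (induction n) auto

lemma T_space: "x \<in> space M \<Longrightarrow> T x \<in> space M"
  using measurable_space[OF T_meas] .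

lemma Tn_space: "x \<in> space M \<Longrightarrow> (T ^^ n) x \<in> space M"
  using measurable_space[OF Tn_meas] .

lemma Tinv_T: "x \<in> space M \<Longrightarrow> Tinv M T (T x) = x"
  using invT unfolding invertible_mpt_def Tinv_def bij_betw_def
  by (auto intro: the_inv_into_f_f)

lemma Tinv_Tn: "x \<in> space M \<Longrightarrow> k \<le> m \<Longrightarrow> (Tinv M T ^^ k) ((T ^^ m) x) = (T ^^ (m - k)) x"
proof (induction k)
  case 0 then show ?case by simp
next
  case (Suc k)
  then have "(Tinv M T ^^ Suc k) ((T ^^ m) x) = Tinv M T ((T ^^ (m - k)) x)" by simp
  also have "m - k = Suc (m - Suc k)" using Suc by simp
  also have "Tinv M T ((T ^^ Suc (m - Suc k)) x) = (T ^^ (m - Suc k)) x"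
    using Suc by (simp add: Tinv_T Tn_space)
  finally show ?case .
qed

lemma T_pres: "A \<in> sets M \<Longrightarrow> measure M (T -` A \<inter> space M) = measure M A"
  using invT unfolding invertible_mpt_def measure_def by auto

lemma Tn_pres: "A \<in> sets M \<Longrightarrow> measure M ((T ^^ n) -` A \<inter> space M) = measure M A"
proof (induction n)
  case 0 then show ?case by (simp add: sets.Int_space_eq2)
next
  case (Suc n)
  have "(T ^^ Suc n) -` A \<inter> space M = T -` ((T ^^ n) -` A \<inter> space M) \<inter> space M"
    using T_space by (auto simp: funpow_Suc_right simp del: funpow.simps)
  also have "measure M \<dots> = measure M ((T ^^ n) -` A \<inter> space M)"
    by (rule T_pres) (rule measurable_sets[OF Tn_meas Suc.prems])
  finally show ?case using Suc.IH[OF Suc.prems] by (rule trans)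
qed

lemma kac_sum:
  assumes B[measurable]: "B \<in> sets M"
  shows "summable (\<lambda>m. prob {y\<in>space M. y \<in> B \<and> (\<forall>j\<in>{1..m}. (T ^^ j) y \<notin> B)})"
proof -
  define H where "H m = {z\<in>space M. \<forall>j<m. (T ^^ j) z \<notin> B}" for m
  define E where "E m = {y\<in>space M. y \<in> B \<and> (\<forall>j\<in>{1..m}. (T ^^ j) y \<notin> B)}" for m
  have Hm[measurable]: "H m \<in> sets M" for m unfolding H_def by measurable
  have Em[measurable]: "E m \<in> sets M" for m unfolding E_def by measurable
  have pre: "T -` H m \<inter> space M = H (Suc m) \<union> E m" for m
  proof -
    have "T -` H m \<inter> space M = {z\<in>space M. \<forall>j<m. (T ^^ Suc j) z \<notin> B}"
      unfolding H_def using T_space by (auto simp: funpow_Suc_right simp del: funpow.simps)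
    also have "\<dots> = H (Suc m) \<union> E m"
    proof -
      have sh: "(\<forall>j<m. (T ^^ Suc j) z \<notin> B) = (\<forall>j\<in>{1..m}. (T ^^ j) z \<notin> B)" for z
      proof -
        have "{1..m} = Suc ` {..<m}" by (simp add: image_Suc_lessThan)
        then show ?thesis by auto
      qed
      show ?thesis unfolding H_def E_def All_less_Suc2 sh by (auto simp del: funpow.simps simp: funpow_0)
    qed
    finally show ?thesis .
  qed
  have step: "prob (H m) = prob (H (Suc m)) + prob (E m)" for m
  proof -
    have "prob (H m) = prob (T -` H m \<inter> space M)" using T_pres[OF Hm] by simp
    also have "\<dots> = prob (H (Suc m)) + prob (E m)"
      unfolding pre by (rule finite_measure_Union) (auto simp: H_def E_def)
    finally show ?thesis .
  qed
  have tel: "(\<Sum>m<K. prob (E m)) = prob (H 0) - prob (H K)" for K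
  proof (induction K)
    case (Suc K)
    then show ?case using step[of K] by simp
  qed simp
  show ?thesis
    unfolding E_def[symmetric]
  proof (rule summableI_nonneg_bounded)
    fix K show "(\<Sum>m<K. prob (E m)) \<le> 1"
      using tel[of K] measure_nonneg[of M "H K"] prob_le_1[of "H 0"] by linarith
  qed auto
qed

lemma summable_div2:
  fixes g :: "nat \<Rightarrow> real"
  assumes "summable g" "\<And>n. 0 \<le> g n"
  shows "summable (\<lambda>m. g (m div 2))"
proof -
  have d: "(\<Sum>m<2*K. g (m div 2)) = 2 * (\<Sum>a<K. g a)" for K
  proof (induction K)
    case (Suc K)
    have "2 * Suc K = Suc (Suc (2*K))" by simp
    then show ?case using Suc by simp
  qed simp
  show ?thesis
  proof (rule summableI_nonneg_bounded)
    fix n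
    have "(\<Sum>m<n. g (m div 2)) \<le> (\<Sum>m<2*n. g (m div 2))"
      by (rule sum_mono2) (auto simp: assms)
    also have "\<dots> = 2 * (\<Sum>a<n. g a)" by (rule d)
    also have "\<dots> \<le> 2 * suminf g"
      using sum_le_suminf[OF assms(1), of "{..<n}"] assms(2) by auto
    finally show "(\<Sum>m<n. g (m div 2)) \<le> 2 * suminf g" .
  qed (use assms in auto)
qed

lemma gaps_AE:
  assumes B[measurable]: "B \<in> sets M"
  shows "AE x in M. eventually (\<lambda>m. \<not> ((T ^^ m) x \<in> B \<and> (\<forall>j\<in>{1..m div 2}. (T ^^ (j + m)) x \<notin> B))) sequentially"
proof -
  define E where "E m = {y\<in>space M. y \<in> B \<and> (\<forall>j\<in>{1..m}. (T ^^ j) y \<notin> B)}" for m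
  have Em[measurable]: "E m \<in> sets M" for m unfolding E_def by measurable
  define F where "F m = (T ^^ m) -` E (m div 2) \<inter> space M" for m
  have Fm[measurable]: "F m \<in> sets M" for m unfolding F_def by measurable
  have "summable (\<lambda>m. prob (E (m div 2)))"
    by (rule summable_div2[OF kac_sum[OF B, folded E_def]]) auto
  then have "summable (\<lambda>m. prob (F m))" unfolding F_def using Tn_pres[OF Em] by simp
  then have "AE x in M. eventually (\<lambda>n. x \<in> space M - F n) sequentially"
    by (intro borel_cantelli_AE1) (auto simp: emeasure_eq_measure)
  then show ?thesis
  proof eventually_elim
    case (elim x)
    then show ?case
    proof (rule eventually_mono)
      fix m assume a: "x \<in> space M - F m"
      then have xs: "x \<in> space M" by blast
      have "(T ^^ m) x \<notin> E (m div 2)" using a unfolding F_def by blast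
      moreover have "(T ^^ m) x \<in> space M" using xs by (rule Tn_space)
      moreover have "(T ^^ j) ((T ^^ m) x) = (T ^^ (j + m)) x" for j
        by (simp only: funpow_add o_apply)
      ultimately show "\<not> ((T ^^ m) x \<in> B \<and> (\<forall>j\<in>{1..m div 2}. (T ^^ (j + m)) x \<notin> B))"
        unfolding E_def by simp
    qed
  qed
qed

lemma recur_AE:
  assumes B[measurable]: "B \<in> sets M" and pos: "prob B > 0" and erg: "ergodic M T"
  shows "AE x in M. \<forall>k. \<exists>m\<ge>k. (T ^^ m) x \<in> B"
proof -
  define G where "G = {x\<in>space M. \<forall>k. \<exists>m\<ge>k. (T ^^ m) x \<in> B}"
  define W where "W k = {x\<in>space M. \<forall>m\<ge>k. (T ^^ m) x \<notin> B}" for k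
  have G[measurable]: "G \<in> sets M" unfolding G_def by measurable
  have W[measurable]: "W k \<in> sets M" for k unfolding W_def by measurable
  have inv: "T -` G \<inter> space M = G"
  proof -
    have "T -` G \<inter> space M = {x\<in>space M. \<forall>k. \<exists>m\<ge>k. (T ^^ Suc m) x \<in> B}"
      unfolding G_def using T_space by (auto simp: funpow_Suc_right simp del: funpow.simps)
    also have "\<dots> = G"
    proof -
      have "(\<forall>k. \<exists>m\<ge>k. (T ^^ Suc m) x \<in> B) = (\<forall>k. \<exists>m\<ge>k. (T ^^ m) x \<in> B)" for x
      proof
        assume h: "\<forall>k. \<exists>m\<ge>k. (T ^^ Suc m) x \<in> B"
        show "\<forall>k. \<exists>m\<ge>k. (T ^^ m) x \<in> B"
        proof
          fix k obtain m where "m \<ge> k" "(T ^^ Suc m) x \<in> B" using h by blast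
          then show "\<exists>m\<ge>k. (T ^^ m) x \<in> B" by (intro exI[of _ "Suc m"]) auto
        qed
      next
        assume h: "\<forall>k. \<exists>m\<ge>k. (T ^^ m) x \<in> B"
        show "\<forall>k. \<exists>m\<ge>k. (T ^^ Suc m) x \<in> B"
        proof
          fix k obtain m where "m \<ge> Suc k" "(T ^^ m) x \<in> B" using h by blast
          then show "\<exists>m\<ge>k. (T ^^ Suc m) x \<in> B" by (intro exI[of _ "m - 1"]) auto
        qed
      qed
      then show ?thesis unfolding G_def by simp
    qed
    finally show ?thesis .
  qed
  have incW: "incseq W" unfolding incseq_def W_def by auto
  have WB: "prob (W k) \<le> 1 - prob B" for k
  proof -
    have "prob (W k) + prob ((T ^^ k) -` B \<inter> space M) = prob (W k \<union> ((T ^^ k) -` B \<inter> space M))"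
      by (rule finite_measure_Union[symmetric]) (auto simp: W_def)
    also have "\<dots> \<le> 1" by (rule prob_le_1)
    finally show ?thesis using Tn_pres[OF B, of k] by simp
  qed
  have "(\<lambda>k. prob (W k)) \<longlonglongrightarrow> prob (\<Union>k. W k)"
    by (rule finite_Lim_measure_incseq) (auto simp: incW)
  then have UW: "prob (\<Union>k. W k) \<le> 1 - prob B"
    by (rule LIMSEQ_le_const2) (auto intro: WB)
  have "space M - G = (\<Union>k. W k)" unfolding G_def W_def by auto
  then have "prob G = 1 - prob (\<Union>k. W k)"
    using prob_compl[OF G] by simp
  with UW pos have "prob G > 0" by simp
  then have "emeasure M G \<noteq> 0" by (simp add: emeasure_eq_measure)
  moreover have "emeasure M G = 0 \<or> emeasure M G = 1"
    using erg inv G unfolding ergodic_def by blast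
  ultimately have "emeasure M G = 1" by blast
  then have "prob (space M - G) = 0" using prob_compl[OF G] by (simp add: emeasure_eq_measure)
  then have "emeasure M (space M - G) = 0" by (simp add: emeasure_eq_measure)
  then show ?thesis
    by (intro AE_I'[of "space M - G"]) (auto simp: G_def)
qed

end
theorem mainTheorem10:
  fixes M :: "'a measure" and T :: "'a \<Rightarrow> 'a" and f :: "'a \<Rightarrow> real" and C :: real
  assumes "prob_space M"
    and "invertible_mpt M T"
    and "ergodic M T"
    and "f \<in> borel_measurable M"
    and "\<exists>A \<in> sets M. emeasure M A > 0 \<and>
           (\<forall>x \<in> A. \<exists>N. \<forall>n \<ge> N.
              \<bar>f ((Tinv M T ^^ n) x) + f ((T ^^ n) x)\<bar> / real n < C)"
  shows "AE x in M. limsup (\<lambda>n. ereal (\<bar>f ((T ^^ (2 * n)) x)\<bar> / real n)) \<le> ereal (24 * C)"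
proof -
  interpret ipt M T using assms(1,2) by (simp add: ipt_def ipt_axioms_def)
  note fm[measurable] = assms(4)
  obtain A where A: "A \<in> sets M" "emeasure M A > 0"
    "\<forall>x \<in> A. \<exists>N. \<forall>n \<ge> N. \<bar>f ((Tinv M T ^^ n) x) + f ((T ^^ n) x)\<bar> / real n < C"
    using assms(5) by blast
  define B where "B N = {y\<in>space M. \<forall>k\<ge>N. \<bar>f ((Tinv M T ^^ k) y) + f ((T ^^ k) y)\<bar> / real k < C}" for N
  have Bm[measurable]: "B N \<in> sets M" for N unfolding B_def by measurable
  have "A \<subseteq> (\<Union>N. B N)" using A(3) sets.sets_into_space[OF A(1)] unfolding B_def by blast
  have UBm: "(\<Union>N. B N) \<in> sets M" by measurable
  have "\<exists>N. emeasure M (B N) \<noteq> 0"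
  proof (rule ccontr)
    assume "\<not> ?thesis"
    then have "emeasure M (\<Union>N. B N) = 0" by (intro emeasure_UN_eq_0) auto
    moreover have "emeasure M A \<le> emeasure M (\<Union>N. B N)"
      by (rule emeasure_mono[OF \<open>A \<subseteq> (\<Union>N. B N)\<close> UBm])
    ultimately have "emeasure M A = 0" by simp
    then show False using A(2) by simp
  qed
  then obtain N where N: "emeasure M (B N) \<noteq> 0" by blast
  have pos: "prob (B N) > 0"
  proof -
    have "ennreal (prob (B N)) \<noteq> 0" using N by (simp add: emeasure_eq_measure)
    then have "prob (B N) \<noteq> 0" by simp
    with measure_nonneg[of M "B N"] show ?thesis by linarith
  qed
  have Cpos: "C > 0"
  proof -
    have "B N \<noteq> {}" using N by (metis emeasure_empty)
    then obtain y where y: "y \<in> B N" by blast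
    have "\<forall>k\<ge>N. \<bar>f ((Tinv M T ^^ k) y) + f ((T ^^ k) y)\<bar> / real k < C"
      using y unfolding B_def by blast
    then have "\<bar>f ((Tinv M T ^^ Suc N) y) + f ((T ^^ Suc N) y)\<bar> / real (Suc N) < C"
      by (rule allE[of _ "Suc N"]) simp
    moreover have "0 \<le> \<bar>f ((Tinv M T ^^ Suc N) y) + f ((T ^^ Suc N) y)\<bar> / real (Suc N)" by simp
    ultimately show ?thesis by linarith
  qed
  have AE1: "AE x in M. \<forall>k. \<exists>m\<ge>k. (T ^^ m) x \<in> B N"
    by (rule recur_AE[OF Bm pos assms(3)])
  have AE2: "AE x in M. eventually (\<lambda>m. \<not> ((T ^^ m) x \<in> B N \<and> (\<forall>j\<in>{1..m div 2}. (T ^^ (j + m)) x \<notin> B N))) sequentially"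
    by (rule gaps_AE[OF Bm])
  show ?thesis
    using AE_space AE1 AE2
  proof (eventually_elim)
    case (elim x)
    note xs = elim(1) and inf = elim(2) and gap = elim(3)
    have pair: "\<bar>f ((T ^^ (m - k)) x) + f ((T ^^ (k + m)) x)\<bar> < C * real k"
      if V: "(T ^^ m) x \<in> B N" and k: "N \<le> k" "0 < k" "k \<le> m" for m k
    proof -
      have "\<forall>k\<ge>N. \<bar>f ((Tinv M T ^^ k) ((T ^^ m) x)) + f ((T ^^ k) ((T ^^ m) x))\<bar> / real k < C"
        using V unfolding B_def by blast
      then have "\<bar>f ((Tinv M T ^^ k) ((T ^^ m) x)) + f ((T ^^ k) ((T ^^ m) x))\<bar> / real k < C"
        using k(1) by blast
      moreover have "(Tinv M T ^^ k) ((T ^^ m) x) = (T ^^ (m - k)) x"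
        using Tinv_Tn[OF xs k(3)] .
      moreover have "(T ^^ k) ((T ^^ m) x) = (T ^^ (k + m)) x" by (simp only: funpow_add o_apply)
      ultimately have "\<bar>f ((T ^^ (m - k)) x) + f ((T ^^ (k + m)) x)\<bar> / real k < C" by simp
      then show ?thesis using k(2) by (simp add: divide_less_eq mult.commute)
    qed
    have "limsup (\<lambda>n. ereal (\<bar>f ((T ^^ (2 * n)) x)\<bar> / real n)) \<le> ereal (2 * C)"
      by (rule core[where V = "\<lambda>m. (T ^^ m) x \<in> B N" and h = "\<lambda>i. f ((T ^^ i) x)" and N = N,
            OF inf gap pair Cpos])
    also have "\<dots> \<le> ereal (24 * C)" using Cpos by simp
    finally show ?case .
  qed
qed

end
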